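(* Let $k\ge 1$ be an integer and $P$ a finite point set in the plane with $n$ points (in general position with respect to all cone directions used). For $j=0,\dots,k-1$ let $G_j$ be the half-$\theta_6$-graph of $P$ constructed with all cones rotated by $j\pi/(3k)$ radians. Then the union $G_0\cup\dots\cup G_{k-1}$ is a geometric spanner with at most $3kn$ edges and spanning ratio at most $\sqrt{3}\cos\frac{\pi}{6k}+\sin\frac{\pi}{6k}$; i.e. for all $u,w\in P$ it contains a path from $u$ to $w$ of length at most $\left(\sqrt{3}\cos\frac{\pi}{6k}+\sin\frac{\pi}{6k}\right)|uw|$.
   Context: Cones: for a point $u$, the plane is partitioned into six cones with apex $u$, bounded by the rays from $u$ at angles $j\pi/3$ ($j=0,\dots,5$) from the positive $x$-axis. In counterclockwise order starting from the positive $x$-axis they are labelled $\overline{C}_1, C_0, \overline{C}_2, C_1, \overline{C}_0, C_2$; $C_0,C_1,C_2$ are positive cones. Half-$\theta_6$-graph: for each $u\in P$ and each positive cone $C$ of $u$ containing other points, add an edge from $u$ to the point of $P$ in $C$ whose orthogonal projection onto the bisector of $C$ is closest to $u$ (each vertex thus has at most 3 such outgoing edges). A rotated version uses the same construction with all cone boundary rays rotated by the given angle. General position: no two points lie on a line parallel to any cone boundary ray used. Edge weights are Euclidean lengths. *)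

theory Defs
  imports "HOL-Analysis.Analysis"
begin

text \<open>For a rotation angle a, the cones with apex u are the six sectors
  [a + i*pi/3, a + (i+1)*pi/3), i = 0..5, in counterclockwise order, labelled
  Cbar1, C0, Cbar2, C1, Cbar0, C2. The positive cone C_c (c = 0,1,2) is sector 2c+1.\<close>

definition in_sector :: "real \<Rightarrow> nat \<Rightarrow> complex \<Rightarrow> complex \<Rightarrow> bool" where
  "in_sector a i u v \<longleftrightarrow>
     (\<exists>r \<theta>. r > 0 \<and> a + real i * pi / 3 \<le> \<theta> \<and> \<theta> < a + real (i + 1) * pi / 3
            \<and> v - u = complex_of_real r * cis \<theta>)"

definition pos_cone :: "real \<Rightarrow> nat \<Rightarrow> complex \<Rightarrow> complex \<Rightarrow> bool" where
  "pos_cone a c u v \<longleftrightarrow> in_sector a (2 * c + 1) u v"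

definition bisector :: "real \<Rightarrow> nat \<Rightarrow> real" where
  "bisector a c = a + real (2 * c + 1) * pi / 3 + pi / 6"

definition proj_bis :: "real \<Rightarrow> nat \<Rightarrow> complex \<Rightarrow> complex \<Rightarrow> real" where
  "proj_bis a c u v = Re ((v - u) * cnj (cis (bisector a c)))"

definition half_theta6_arc :: "complex set \<Rightarrow> real \<Rightarrow> complex \<Rightarrow> complex \<Rightarrow> bool" where
  "half_theta6_arc P a u w \<longleftrightarrow> u \<in> P \<and> w \<in> P \<and>
     (\<exists>c<3. pos_cone a c u w \<and>
        (\<forall>v\<in>P. pos_cone a c u v \<longrightarrow> proj_bis a c u w \<le> proj_bis a c u v))"

definition half_theta6_edges :: "complex set \<Rightarrow> real \<Rightarrow> complex set set" where
  "half_theta6_edges P a = {{u, w} | u w. half_theta6_arc P a u w}"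

definition rot_angle :: "nat \<Rightarrow> nat \<Rightarrow> real" where
  "rot_angle k j = real j * pi / (3 * real k)"

definition union_edges :: "nat \<Rightarrow> complex set \<Rightarrow> complex set set" where
  "union_edges k P = (\<Union>j<k. half_theta6_edges P (rot_angle k j))"

definition general_position :: "nat \<Rightarrow> complex set \<Rightarrow> bool" where
  "general_position k P \<longleftrightarrow>
     (\<forall>p\<in>P. \<forall>q\<in>P. \<forall>j<k. \<forall>m<6::nat. p \<noteq> q \<longrightarrow>
        \<not> (\<exists>r::real. q - p = complex_of_real r * cis (rot_angle k j + real m * pi / 3)))"

definition is_path :: "complex set set \<Rightarrow> complex list \<Rightarrow> complex \<Rightarrow> complex \<Rightarrow> bool" where
  "is_path E xs u w \<longleftrightarrow> xs \<noteq> [] \<and> hd xs = u \<and> last xs = w \<and>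
     (\<forall>i < length xs - 1. {xs ! i, xs ! Suc i} \<in> E)"

definition path_length :: "complex list \<Rightarrow> real" where
  "path_length xs = (\<Sum>i < length xs - 1. dist (xs ! i) (xs ! Suc i))"

end

theory Submission
  imports Defs
begin

definition hx :: "real \<Rightarrow> nat \<Rightarrow> complex \<Rightarrow> real" where
  "hx a c v = Re (v * cnj (cis (bisector a c)))"

lemma proj_bis_hx: "proj_bis a c u v = hx a c v - hx a c u"
  unfolding proj_bis_def hx_def by (simp add: left_diff_distrib)

lemma hx_diff: "hx a c v - hx a c u = Re ((v - u) * cnj (cis (bisector a c)))"
  unfolding hx_def by (simp add: left_diff_distrib)

lemma cis_shift_2pi: "cis (x + 2*pi) = cis x"
  by (simp add: cis_mult[symmetric])

lemma cis_bis_next: "c < 3 \<Longrightarrow> cis (bisector a ((c+1) mod 3)) = cis (bisector a c + 2*pi/3)"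
proof -
  assume "c < 3"
  then consider "c = 0" | "c = 1" | "c = 2" by linarith
  then show ?thesis
  proof cases
    case 1 then show ?thesis by (simp add: bisector_def algebra_simps)
  next
    case 2 then show ?thesis by (simp add: bisector_def algebra_simps)
  next
    case 3
    have "bisector a 2 + 2*pi/3 = bisector a 0 + 2*pi" by (simp add: bisector_def algebra_simps)
    then show ?thesis using 3 by (simp add: cis_shift_2pi)
  qed
qed

lemma cis_bis_prev: "c < 3 \<Longrightarrow> cis (bisector a ((c+2) mod 3)) = cis (bisector a c - 2*pi/3)"
proof -
  assume "c < 3"
  then consider "c = 0" | "c = 1" | "c = 2" by linarith
  then show ?thesis
  proof cases
    case 1
    have "bisector a 2 + 2*pi = bisector a 0 - 2*pi/3 + 2 * pi + 2*pi" by (simp add: bisector_def algebra_simps)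
    hence "cis (bisector a 2) = cis (bisector a 0 - 2*pi/3)"
      by (metis cis_shift_2pi)
    then show ?thesis using 1 by (simp add: numeral_2_eq_2)
  next
    case 2
    have "bisector a 0 + 2*pi = bisector a 1 - 2*pi/3 + 2*pi" by (simp add: bisector_def algebra_simps)
    hence "cis (bisector a 0) = cis (bisector a 1 - 2*pi/3)" by (metis cis_shift_2pi)
    then show ?thesis using 2 by simp
  next
    case 3 then show ?thesis by (simp add: bisector_def algebra_simps)
  qed
qed

lemma Re_rcis_cnj: "Re (complex_of_real r * cis t * cnj (cis g)) = r * cos (t - g)"
  by (simp add: cis_cnj mult.assoc cis_mult)

lemma cos_plus_2pi3: "cos (t + 2*pi/3) = - cos t / 2 - sqrt 3 / 2 * sin t"
proof -
  have "cos (2*pi/3) = - 1/2" using cos_60 cos_pi_minus[of "pi/3"] by (simp add: field_simps)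
  moreover have "sin (2*pi/3) = sqrt 3 / 2" using sin_60 sin_pi_minus[of "pi/3"] by (simp add: field_simps)
  ultimately show ?thesis by (simp add: cos_add)
qed

lemma cos_minus_2pi3: "cos (t - 2*pi/3) = - cos t / 2 + sqrt 3 / 2 * sin t"
proof -
  have "cos (2*pi/3) = - 1/2" using cos_60 cos_pi_minus[of "pi/3"] by (simp add: field_simps)
  moreover have "sin (2*pi/3) = sqrt 3 / 2" using sin_60 sin_pi_minus[of "pi/3"] by (simp add: field_simps)
  ultimately show ?thesis by (simp add: cos_diff)
qed

lemma hx_rcis: "v - u = complex_of_real r * cis t \<Longrightarrow> hx a c v - hx a c u = r * cos (t - bisector a c)"
  unfolding hx_diff by (simp only: Re_rcis_cnj)

lemma hx_rcis_next: assumes "c < 3" "v - u = complex_of_real r * cis t"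
  shows "hx a ((c+1) mod 3) v - hx a ((c+1) mod 3) u = r * cos (t - bisector a c - 2*pi/3)"
proof -
  have "hx a ((c+1) mod 3) v - hx a ((c+1) mod 3) u = Re ((v-u) * cnj (cis (bisector a c + 2*pi/3)))"
    by (simp only: hx_diff cis_bis_next[OF assms(1)])
  also have "\<dots> = r * cos (t - (bisector a c + 2*pi/3))" by (simp only: assms(2) Re_rcis_cnj)
  finally show ?thesis by (simp add: algebra_simps)
qed

lemma hx_rcis_prev: assumes "c < 3" "v - u = complex_of_real r * cis t"
  shows "hx a ((c+2) mod 3) v - hx a ((c+2) mod 3) u = r * cos (t - bisector a c + 2*pi/3)"
proof -
  have "hx a ((c+2) mod 3) v - hx a ((c+2) mod 3) u = Re ((v-u) * cnj (cis (bisector a c - 2*pi/3)))"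
    by (simp only: hx_diff cis_bis_prev[OF assms(1)])
  also have "\<dots> = r * cos (t - (bisector a c - 2*pi/3))" by (simp only: assms(2) Re_rcis_cnj)
  finally show ?thesis by (simp add: algebra_simps)
qed

lemma lt3: "(c::nat) < 3 \<Longrightarrow> c = 0 \<or> c = 1 \<or> c = 2" by auto

lemma other_idx: "c < 3 \<Longrightarrow> i < 3 \<Longrightarrow> i \<noteq> c \<Longrightarrow> i = (c+1) mod 3 \<or> i = (c+2) mod (3::nat)"
  using lt3[of c] lt3[of i] by auto

lemma idx_facts: "(c::nat) < 3 \<Longrightarrow> (c+1) mod 3 < 3 \<and> (c+2) mod 3 < 3 \<and> (c+1) mod 3 \<noteq> c \<and> (c+2) mod 3 \<noteq> c \<and> (c+1) mod 3 \<noteq> (c+2) mod 3"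
  using lt3[of c] by auto

lemma sin_pi6_minus: "sin (pi/6 - s) = cos s / 2 - sqrt 3 / 2 * sin s"
  by (simp add: sin_diff sin_30 cos_30)

lemma sin_pi6_plus: "sin (pi/6 + s) = cos s / 2 + sqrt 3 / 2 * sin s"
  by (simp add: sin_add sin_30 cos_30)

lemma cone_imp:
  assumes "pos_cone a c u v" "c < 3"
  shows "hx a c v > hx a c u \<and> (\<forall>i<3. i \<noteq> c \<longrightarrow> hx a i v \<le> hx a i u)"
proof -
  obtain r \<theta> where r: "r > 0" and lo: "a + real (2*c+1) * pi / 3 \<le> \<theta>"
    and hi: "\<theta> < a + real (2*c+1+1) * pi / 3" and eq: "v - u = complex_of_real r * cis \<theta>"
    using assms(1) unfolding pos_cone_def in_sector_def by blast
  define s where "s = \<theta> - bisector a c"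
  have s1: "- (pi/6) \<le> s" and s2: "s < pi/6"
    using lo hi unfolding s_def bisector_def by (auto simp: field_simps)
  have "cos s > 0" using s1 s2 by (intro cos_gt_zero_pi) auto
  hence "r * cos s > 0" using r by simp
  hence A: "hx a c v > hx a c u" using hx_rcis[OF eq, of a c] s_def by simp
  have "sin (pi/6 - s) \<ge> 0" using s1 s2 by (intro sin_ge_zero) auto
  hence B: "cos (s - 2*pi/3) \<le> 0" by (simp add: cos_minus_2pi3 sin_pi6_minus)
  have "sin (pi/6 + s) \<ge> 0" using s1 s2 by (intro sin_ge_zero) auto
  hence C: "cos (s + 2*pi/3) \<le> 0" by (simp add: cos_plus_2pi3 sin_pi6_plus)
  have "hx a i v \<le> hx a i u" if "i < 3" "i \<noteq> c" for i
  proof -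
    from other_idx[OF assms(2) that] show ?thesis
    proof
      assume "i = (c+1) mod 3"
      moreover have "r * cos (\<theta> - bisector a c - 2*pi/3) \<le> 0"
        using B r s_def by (intro mult_nonneg_nonpos) auto
      ultimately show ?thesis using hx_rcis_next[OF assms(2) eq, of a] by simp
    next
      assume "i = (c+2) mod 3"
      moreover have "r * cos (\<theta> - bisector a c + 2*pi/3) \<le> 0"
        using C r s_def by (intro mult_nonneg_nonpos) auto
      ultimately show ?thesis using hx_rcis_prev[OF assms(2) eq, of a] by simp
    qed
  qed
  with A show ?thesis by blast
qed

lemma cone_dist:
  assumes "pos_cone a c u v"
  shows "dist u v \<le> 2 / sqrt 3 * (hx a c v - hx a c u)"
proof -
  obtain r \<theta> where r: "r > 0" and lo: "a + real (2*c+1) * pi / 3 \<le> \<theta>"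
    and hi: "\<theta> < a + real (2*c+1+1) * pi / 3" and eq: "v - u = complex_of_real r * cis \<theta>"
    using assms(1) unfolding pos_cone_def in_sector_def by blast
  define s where "s = \<theta> - bisector a c"
  have s1: "- (pi/6) \<le> s" and s2: "s < pi/6"
    using lo hi unfolding s_def bisector_def by (auto simp: field_simps)
  have "cos (pi/6) \<le> cos \<bar>s\<bar>" using s1 s2 by (subst cos_mono_le_eq) auto
  hence cs: "sqrt 3 / 2 \<le> cos s" by (simp add: cos_30)
  have "cmod (v - u) = r" using eq r by (simp add: norm_mult)
  hence d: "dist u v = r" by (simp add: dist_norm norm_minus_commute)
  have hv: "hx a c v - hx a c u = r * cos s" using hx_rcis[OF eq, of a c] s_def by simp
  have "r * (sqrt 3 / 2) \<le> r * cos s" using cs r by (intro mult_left_mono) auto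
  hence "r \<le> 2 / sqrt 3 * (r * cos s)" by (simp add: field_simps)
  thus ?thesis using d hv by simp
qed

lemma cos_nonpos_hi: "pi/2 \<le> t \<Longrightarrow> t \<le> pi \<Longrightarrow> cos t \<le> 0"
  using cos_ge_zero[of "pi - t"] cos_pi_minus[of t] by simp

lemma sin_nonpos_lo: "- pi \<le> x \<Longrightarrow> x \<le> 0 \<Longrightarrow> sin x \<le> 0"
  using sin_ge_zero[of "- x"] by simp

lemma imp_cone:
  assumes c: "c < 3" and A: "hx a c v > hx a c u" and O: "\<forall>i<3. i \<noteq> c \<longrightarrow> hx a i v < hx a i u"
  shows "pos_cone a c u v"
proof -
  define \<beta> where "\<beta> = bisector a c"
  define z where "z = (v - u) * cnj (cis \<beta>)"
  define t where "t = Arg z"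
  define r where "r = cmod z"
  have zr: "z = complex_of_real r * cis t" using rcis_cmod_Arg[of z] by (simp add: r_def t_def rcis_def)
  have vu: "v - u = z * cis \<beta>" unfolding z_def by (simp add: cis_cnj mult.assoc cis_mult)
  hence eq: "v - u = complex_of_real r * cis (t + \<beta>)" using zr by (simp add: mult.assoc cis_mult)
  have tb: "- pi < t" "t \<le> pi" using Arg_bounded[of z] t_def by auto
  have h0: "hx a c v - hx a c u = r * cos t" using hx_rcis[OF eq, of a c] \<beta>_def by simp
  have h1: "hx a ((c+1) mod 3) v - hx a ((c+1) mod 3) u = r * cos (t - 2*pi/3)"
    using hx_rcis_next[OF c eq, of a] \<beta>_def by simp
  have h2: "hx a ((c+2) mod 3) v - hx a ((c+2) mod 3) u = r * cos (t + 2*pi/3)"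
    using hx_rcis_prev[OF c eq, of a] \<beta>_def by simp
  have "r \<ge> 0" unfolding r_def by simp
  have pos: "r * cos t > 0" using A h0 by simp
  hence r0: "r > 0" using \<open>r \<ge> 0\<close> by (cases "r = 0") auto
  have ct: "cos t > 0" using pos r0 by (simp add: zero_less_mult_iff)
  have "r * cos (t - 2*pi/3) < 0"
    using O[rule_format, of "(c+1) mod 3"] h1 idx_facts[OF c] by simp
  hence n1: "cos (t - 2*pi/3) < 0" using r0 by (simp add: mult_less_0_iff)
  have "r * cos (t + 2*pi/3) < 0"
    using O[rule_format, of "(c+2) mod 3"] h2 idx_facts[OF c] by simp
  hence n2: "cos (t + 2*pi/3) < 0" using r0 by (simp add: mult_less_0_iff)
  have t1: "t < pi/2"
  proof (rule ccontr)
    assume "\<not> t < pi/2" then show False using cos_nonpos_hi[of t] tb ct by simp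
  qed
  have t2: "t > - (pi/2)"
  proof (rule ccontr)
    assume "\<not> t > - (pi/2)" then show False using cos_nonpos_hi[of "-t"] tb ct by simp
  qed
  have "sin (pi/6 - t) > 0" using n1 by (simp add: cos_minus_2pi3 sin_pi6_minus)
  hence t3: "t < pi/6"
    using sin_nonpos_lo[of "pi/6 - t"] t1 t2 by (cases "t < pi/6") auto
  have "sin (pi/6 + t) > 0" using n2 by (simp add: cos_plus_2pi3 sin_pi6_plus)
  hence t4: "t > - (pi/6)"
    using sin_nonpos_lo[of "pi/6 + t"] t1 t2 by (cases "t > - (pi/6)") auto
  show ?thesis unfolding pos_cone_def in_sector_def
    apply (rule exI[of _ r], rule exI[of _ "t + \<beta>"])
    using r0 t3 t4 eq unfolding \<beta>_def bisector_def by (auto simp: field_simps)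
qed

lemma hx_polar: "hx a c v = cmod v * cos (Arg v - bisector a c)"
proof -
  have "v - 0 = complex_of_real (cmod v) * cis (Arg v)" using rcis_cmod_Arg[of v] by (simp add: rcis_def)
  from hx_rcis[OF this, of a c] show ?thesis by (simp add: hx_def)
qed

lemma hx_sum012: "hx a 0 v + hx a 1 v + hx a 2 v = 0"
proof -
  define s where "s = Arg v - bisector a 0"
  have e1': "hx a 1 v = Re (v * cnj (cis (bisector a 0 + 2*pi/3)))"
    using cis_bis_next[of 0 a] by (simp add: hx_def)
  have m2: "(0+2) mod 3 = (2::nat)" by simp
  have X: "cis (bisector a 2) = cis (bisector a 0 - 2*pi/3)" using cis_bis_prev[of 0 a, unfolded m2] by simp
  have e2': "hx a 2 v = Re (v * cnj (cis (bisector a 0 - 2*pi/3)))"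
    by (simp only: hx_def X)
  have vv: "v = complex_of_real (cmod v) * cis (Arg v)" using rcis_cmod_Arg[of v] by (simp add: rcis_def)
  have "hx a 1 v = cmod v * cos (Arg v - (bisector a 0 + 2*pi/3))"
    using e1' vv Re_rcis_cnj by metis
  hence h1: "hx a 1 v = cmod v * cos (s - 2*pi/3)" unfolding s_def by (simp add: algebra_simps)
  have "hx a 2 v = cmod v * cos (Arg v - (bisector a 0 - 2*pi/3))"
    using e2' vv Re_rcis_cnj by metis
  hence h2: "hx a 2 v = cmod v * cos (s + 2*pi/3)" unfolding s_def by (simp add: algebra_simps)
  have h0: "hx a 0 v = cmod v * cos s" using hx_polar[of a 0 v] s_def by simp
  show ?thesis unfolding h0 h1 h2 cos_minus_2pi3 cos_plus_2pi3 by (simp add: algebra_simps)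
qed

lemma hx_sum3: "c < 3 \<Longrightarrow> j < 3 \<Longrightarrow> k < 3 \<Longrightarrow> c \<noteq> j \<Longrightarrow> c \<noteq> k \<Longrightarrow> j \<noteq> k \<Longrightarrow>
  hx a c v + hx a j v + hx a k v = 0"
  using lt3[of c] lt3[of j] lt3[of k] hx_sum012[of a v] by auto

lemma gp_nz:
  assumes gp: "general_position k P" and j: "j < k" and p: "p \<in> P" and q: "q \<in> P" and pq: "p \<noteq> q"
    and i: "i < 3"
  shows "hx (rot_angle k j) i p \<noteq> hx (rot_angle k j) i q"
proof
  assume eq: "hx (rot_angle k j) i p = hx (rot_angle k j) i q"
  define a where "a = rot_angle k j"
  define \<beta> where "\<beta> = bisector a i"
  define z where "z = (q - p) * cnj (cis \<beta>)"
  have "Re z = 0" using eq hx_diff[of a i q p] unfolding z_def \<beta>_def a_def by simp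
  hence zi: "z = complex_of_real (Im z) * \<i>" by (simp add: complex_eq_iff)
  have "q - p = z * cis \<beta>" unfolding z_def by (simp add: cis_cnj mult.assoc cis_mult)
  also have "\<dots> = complex_of_real (Im z) * cis (\<beta> + pi/2)"
    by (subst zi) (simp add: cis_mult[symmetric] mult.assoc)
  finally have qp: "q - p = complex_of_real (Im z) * cis (\<beta> + pi/2)" .
  obtain m where m: "m < (6::nat)" "cis (\<beta> + pi/2) = cis (a + real m * pi / 3)"
  proof -
    consider "i = 0" | "i = 1" | "i = 2" using i by linarith
    then show ?thesis
    proof cases
      case 1 then show ?thesis using that[of 3] unfolding \<beta>_def bisector_def by (simp add: algebra_simps)
    next
      case 2 then show ?thesis using that[of 5] unfolding \<beta>_def bisector_def by (simp add: algebra_simps)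
    next
      case 3
      have e: "\<beta> + pi/2 = (a + real 1 * pi / 3) + 2 * pi" unfolding 3 \<beta>_def bisector_def
        by (simp add: algebra_simps)
      have "cis (\<beta> + pi/2) = cis (a + real 1 * pi / 3)" by (simp only: e cis_shift_2pi)
      then show ?thesis using that[of 1] by simp
    qed
  qed
  have "\<not> (\<exists>r::real. q - p = complex_of_real r * cis (rot_angle k j + real m * pi / 3))"
    using gp p q j m(1) pq unfolding general_position_def by blast
  with qp m(2) show False unfolding a_def by metis
qed

definition pat :: "real \<Rightarrow> nat \<Rightarrow> complex \<Rightarrow> complex \<Rightarrow> bool" where
  "pat a c u v \<longleftrightarrow> hx a c v > hx a c u \<and> (\<forall>i<3. i \<noteq> c \<longrightarrow> hx a i v < hx a i u)"

definition nzP :: "real \<Rightarrow> complex set \<Rightarrow> bool" where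
  "nzP a P \<longleftrightarrow> (\<forall>p\<in>P. \<forall>q\<in>P. p \<noteq> q \<longrightarrow> (\<forall>i<3. hx a i p \<noteq> hx a i q))"

lemma gp_nzP: "general_position k P \<Longrightarrow> j < k \<Longrightarrow> nzP (rot_angle k j) P"
  unfolding nzP_def using gp_nz by blast

definition dst3 :: "nat \<Rightarrow> nat \<Rightarrow> nat \<Rightarrow> bool" where
  "dst3 c j k \<longleftrightarrow> c < 3 \<and> j < 3 \<and> k < 3 \<and> c \<noteq> j \<and> c \<noteq> k \<and> j \<noteq> k"

lemma dst3_cover: "dst3 c j k \<Longrightarrow> i < 3 \<Longrightarrow> i \<noteq> c \<Longrightarrow> i = j \<or> i = k"
  unfolding dst3_def using lt3[of c] lt3[of j] lt3[of k] lt3[of i] by auto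

lemma dst3_sum: "dst3 c j k \<Longrightarrow> hx a c v + hx a j v + hx a k v = 0"
  unfolding dst3_def using hx_sum3 by blast

lemma pat_iff: "dst3 c j k \<Longrightarrow> pat a c u v \<longleftrightarrow> hx a c v > hx a c u \<and> hx a j v < hx a j u \<and> hx a k v < hx a k u"
  unfolding pat_def using dst3_cover[of c j k] by (auto simp: dst3_def)

lemma pos_cone_pat:
  assumes nz: "nzP a P" and u: "u \<in> P" and v: "v \<in> P" and c: "c < 3"
  shows "pos_cone a c u v \<longleftrightarrow> pat a c u v"
proof
  assume pc: "pos_cone a c u v"
  from cone_imp[OF pc c] have h: "hx a c v > hx a c u" "\<forall>i<3. i \<noteq> c \<longrightarrow> hx a i v \<le> hx a i u" by auto
  hence "u \<noteq> v" by auto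
  hence "\<forall>i<3. hx a i v \<noteq> hx a i u" using nz u v unfolding nzP_def by metis
  with h show "pat a c u v" unfolding pat_def by force
next
  assume "pat a c u v"
  then show "pos_cone a c u v" using imp_cone[OF c] unfolding pat_def by blast
qed

lemma arc_pat:
  assumes nz: "nzP a P" and arc: "half_theta6_arc P a u w"
  shows "u \<in> P \<and> w \<in> P \<and> (\<exists>c<3. pat a c u w \<and> (\<forall>z\<in>P. pat a c u z \<longrightarrow> hx a c w \<le> hx a c z))"
proof -
  from arc obtain c where u: "u\<in>P" and w: "w\<in>P" and c: "c<3" and pc: "pos_cone a c u w"
    and mn: "\<forall>v\<in>P. pos_cone a c u v \<longrightarrow> proj_bis a c u w \<le> proj_bis a c u v"
    unfolding half_theta6_arc_def by blast
  have "pat a c u w" using pos_cone_pat[OF nz u w c] pc by blast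
  moreover have "\<forall>z\<in>P. pat a c u z \<longrightarrow> hx a c w \<le> hx a c z"
    using mn pos_cone_pat[OF nz u _ c] by (auto simp: proj_bis_hx)
  ultimately show ?thesis using u w c by blast
qed

lemma closest:
  assumes fin: "finite P" and nz: "nzP a P" and u: "u \<in> P" and c: "c < 3" and w: "w \<in> P"
    and pw: "pat a c u w"
  shows "\<exists>v\<in>P. {u,v} \<in> half_theta6_edges P a \<and> pat a c u v \<and> dist u v \<le> 2/sqrt 3 * (hx a c v - hx a c u)
     \<and> (\<forall>z\<in>P. pat a c u z \<longrightarrow> hx a c v \<le> hx a c z)"
proof -
  define S where "S = {z\<in>P. pat a c u z}"
  have fS: "finite S" and nS: "S \<noteq> {}" using fin w pw unfolding S_def by auto
  define m where "m = Min (hx a c ` S)"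
  have "m \<in> hx a c ` S" unfolding m_def using fS nS by (intro Min_in) auto
  then obtain v where vS: "v \<in> S" and vm: "hx a c v = m" by auto
  have vmin: "\<forall>z\<in>S. hx a c v \<le> hx a c z" using fS vm unfolding m_def by auto
  have v: "v \<in> P" and pv: "pat a c u v" using vS unfolding S_def by auto
  have pc: "pos_cone a c u v" using pos_cone_pat[OF nz u v c] pv by blast
  have "c < 3 \<and> pos_cone a c u v \<and> (\<forall>z\<in>P. pos_cone a c u z \<longrightarrow> proj_bis a c u v \<le> proj_bis a c u z)"
      using c pc vmin pos_cone_pat[OF nz u _ c] unfolding S_def by (auto simp: proj_bis_hx)
  hence arc: "half_theta6_arc P a u v" unfolding half_theta6_arc_def using u v by blast
  have e: "{u,v} \<in> half_theta6_edges P a" unfolding half_theta6_edges_def using arc by blast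
  have "\<forall>z\<in>P. pat a c u z \<longrightarrow> hx a c v \<le> hx a c z" using vmin unfolding S_def by auto
  then show ?thesis using v e pv cone_dist[OF pc] by blast
qed

inductive cn :: "complex set set \<Rightarrow> complex \<Rightarrow> complex \<Rightarrow> real \<Rightarrow> bool" for E where
  cn_refl: "cn E u u 0"
| cn_step: "{u,v} \<in> E \<Longrightarrow> cn E v w l \<Longrightarrow> cn E u w (dist u v + l)"

lemma cn_trans: "cn E u v l1 \<Longrightarrow> cn E v w l2 \<Longrightarrow> cn E u w (l1 + l2)"
proof (induction rule: cn.induct)
  case (cn_refl u) then show ?case by simp
next
  case (cn_step u v' v l)
  have "cn E u w (dist u v' + (l + l2))" using cn_step by (intro cn.cn_step) auto
  then show ?case by (simp add: add.assoc)
qed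

lemma cn_edge: "{u,v} \<in> E \<Longrightarrow> cn E u v (dist u v)"
  using cn.cn_step[OF _ cn.cn_refl, of u v E] by simp

lemma cn_sym: "cn E u w l \<Longrightarrow> cn E w u l"
proof (induction rule: cn.induct)
  case (cn_refl u) then show ?case by (rule cn.cn_refl)
next
  case (cn_step u v w l)
  have "{v,u} \<in> E" using cn_step.hyps(1) by (simp add: insert_commute)
  hence "cn E v u (dist v u)" by (rule cn_edge)
  from cn_trans[OF cn_step.IH this] show ?case by (simp add: dist_commute add.commute)
qed

lemma cn_mono: "cn E u w l \<Longrightarrow> E \<subseteq> F \<Longrightarrow> cn F u w l"
  by (induction rule: cn.induct) (auto intro: cn.intros)

lemma cn_path: "cn E u w l \<Longrightarrow> \<exists>xs. is_path E xs u w \<and> path_length xs = l"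
proof (induction rule: cn.induct)
  case (cn_refl u) show ?case by (rule exI[of _ "[u]"]) (simp add: is_path_def path_length_def)
next
  case (cn_step u v w l)
  then obtain xs where p: "is_path E xs v w" and pl: "path_length xs = l" by blast
  have ne: "xs \<noteq> []" and h: "hd xs = v" and lst: "last xs = w"
    and ed: "\<forall>i<length xs - 1. {xs!i, xs!Suc i} \<in> E" using p unfolding is_path_def by auto
  have x0: "xs ! 0 = v" using ne h by (simp add: hd_conv_nth)
  have ed2: "\<forall>i<length (u#xs) - 1. {(u#xs)!i, (u#xs)!Suc i} \<in> E"
  proof (intro allI impI)
    fix i assume i: "i < length (u#xs) - 1"
    show "{(u#xs)!i, (u#xs)!Suc i} \<in> E"
    proof (cases i)
      case 0 then show ?thesis using cn_step.hyps(1) x0 by simp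
    next
      case (Suc i') then show ?thesis using ed i by simp
    qed
  qed
  have "is_path E (u # xs) u w" unfolding is_path_def using ed2 ne lst by simp
  moreover have "path_length (u # xs) = dist u v + l"
  proof -
    obtain n where n: "length xs = Suc n" using ne by (cases xs) auto
    have "path_length (u#xs) = (\<Sum>i<Suc n. dist ((u#xs)!i) ((u#xs)!Suc i))"
      unfolding path_length_def using n by simp
    also have "\<dots> = dist u v + (\<Sum>i<n. dist (xs!i) (xs!Suc i))"
      by (subst sum.lessThan_Suc_shift) (simp add: x0)
    also have "\<dots> = dist u v + l" using pl n unfolding path_length_def by simp
    finally show ?thesis .
  qed
  ultimately show ?case by blast
qed

definition ok :: "complex set set \<Rightarrow> complex \<Rightarrow> complex \<Rightarrow> real \<Rightarrow> bool" where
  "ok E u w b \<longleftrightarrow> (\<exists>l. cn E u w l \<and> l \<le> b)"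

lemma ok_edge: "{u,w} \<in> E \<Longrightarrow> dist u w \<le> b \<Longrightarrow> ok E u w b"
  unfolding ok_def using cn_edge by blast

lemma ok_step: "{u,v} \<in> E \<Longrightarrow> dist u v \<le> d \<Longrightarrow> ok E v w b \<Longrightarrow> ok E u w (d + b)"
  unfolding ok_def using cn.cn_step by (meson add_mono)

lemma ok_sym: "ok E u w b \<Longrightarrow> ok E w u b"
  unfolding ok_def using cn_sym by blast

lemma ok_le: "ok E u w b \<Longrightarrow> b \<le> b' \<Longrightarrow> ok E u w b'"
  unfolding ok_def by force

lemma ok_mono: "ok E u w b \<Longrightarrow> E \<subseteq> F \<Longrightarrow> ok F u w b"
  unfolding ok_def using cn_mono by blast

lemma kap: "x + y \<le> z \<Longrightarrow> 2/sqrt 3 * x + 2/sqrt 3 * y \<le> 2/sqrt 3 * (z::real)"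
proof -
  assume "x + y \<le> z"
  hence "2/sqrt 3 * (x + y) \<le> 2/sqrt 3 * z" by (intro mult_left_mono) auto
  thus ?thesis by (simp add: distrib_left)
qed

lemma pair_induct:
  fixes f :: "'a \<Rightarrow> 'a \<Rightarrow> real"
  assumes fin: "finite P"
    and step: "\<And>u w. u \<in> P \<Longrightarrow> w \<in> P \<Longrightarrow> (\<And>p q. p \<in> P \<Longrightarrow> q \<in> P \<Longrightarrow> f p q < f u w \<Longrightarrow> Q p q) \<Longrightarrow> Q u w"
  shows "\<forall>u\<in>P. \<forall>w\<in>P. Q u w"
proof -
  define M where "M u w = card {x \<in> P \<times> P. f (fst x) (snd x) < f u w}" for u w
  have "\<forall>u w. M u w = n \<longrightarrow> u \<in> P \<longrightarrow> w \<in> P \<longrightarrow> Q u w" for n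
  proof (induction n rule: less_induct)
    case (less n)
    show ?case
    proof (intro allI impI)
      fix u w assume Mn: "M u w = n" and u: "u \<in> P" and w: "w \<in> P"
      show "Q u w"
      proof (rule step[OF u w])
        fix p q assume p: "p \<in> P" and q: "q \<in> P" and lt: "f p q < f u w"
        have sub: "{x \<in> P \<times> P. f (fst x) (snd x) < f p q} \<subset> {x \<in> P \<times> P. f (fst x) (snd x) < f u w}"
          using lt p q by force
        have fin2: "finite {x \<in> P \<times> P. f (fst x) (snd x) < f u w}"
          by (rule finite_subset[of _ "P \<times> P"]) (auto simp: fin)
        have "M p q < M u w" unfolding M_def by (rule psubset_card_mono[OF fin2 sub])
        then show "Q p q" using less.IH Mn p q by blast
      qed
    qed
  qed
  then show ?thesis by blast
qed

definition Dn :: "real \<Rightarrow> complex \<Rightarrow> complex \<Rightarrow> real" where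
  "Dn a p q = max (hx a 0 q - hx a 0 p) (max (hx a 1 q - hx a 1 p) (hx a 2 q - hx a 2 p))"

lemma Dn_pat: assumes "pat a c p q" "c < 3" shows "Dn a p q = hx a c q - hx a c p"
proof -
  have A: "hx a c q > hx a c p" and B: "\<And>i. i < 3 \<Longrightarrow> i \<noteq> c \<Longrightarrow> hx a i q < hx a i p"
    using assms(1) unfolding pat_def by auto
  consider "c = 0" | "c = 1" | "c = 2" using assms(2) by linarith
  then show ?thesis
  proof cases
    case 1 then show ?thesis using A B[of 1] B[of 2] by (simp add: Dn_def)
  next
    case 2 then show ?thesis using A B[of 0] B[of 2] by (simp add: Dn_def)
  next
    case 3 then show ?thesis using A B[of 0] B[of 1] by (simp add: Dn_def)
  qed
qed

lemma below_empty:
  assumes nz: "nzP a P" and d: "dst3 c j k" and u: "u \<in> P"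
    and vmin: "\<forall>z\<in>P. pat a c u z \<longrightarrow> hx a c v \<le> hx a c z"
    and z: "z \<in> P" and zc: "hx a c z < hx a c v" and zj: "hx a j z < hx a j u" and zk: "hx a k z < hx a k u"
  shows False
proof -
  have "z \<noteq> u" using zj by auto
  hence ne: "hx a c z \<noteq> hx a c u" using nz z u d unfolding nzP_def dst3_def by blast
  have s1: "hx a c z + hx a j z + hx a k z = 0" and s2: "hx a c u + hx a j u + hx a k u = 0"
    using dst3_sum[OF d] by auto
  have "hx a c z > hx a c u" using ne s1 s2 zj zk by linarith
  hence "pat a c u z" using pat_iff[OF d] zj zk by blast
  then show False using vmin z zc by force
qed

definition emptyR :: "real \<Rightarrow> complex set \<Rightarrow> nat \<Rightarrow> nat \<Rightarrow> nat \<Rightarrow> complex \<Rightarrow> complex \<Rightarrow> bool" where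
  "emptyR a P c j k u w \<longleftrightarrow> (\<forall>z\<in>P. z \<noteq> w \<longrightarrow> hx a c z \<le> hx a c w \<longrightarrow> hx a j z \<le> hx a j u
      \<longrightarrow> hx a k z \<le> hx a k u \<longrightarrow> hx a j z < hx a j w \<longrightarrow> False)"

lemma RL_main:
  assumes fin: "finite P" and nz: "nzP a P"
  shows "\<forall>u\<in>P. \<forall>w\<in>P. \<forall>c j k. dst3 c j k \<longrightarrow> pat a c u w \<longrightarrow> emptyR a P c j k u w \<longrightarrow>
     ok (half_theta6_edges P a) u w (2/sqrt 3 * ((hx a c w - hx a c u) + (hx a j u - hx a j w)))"
proof (rule pair_induct[OF fin, where f = "Dn a"])
  fix u w assume u: "u \<in> P" and w: "w \<in> P"
    and IH: "\<And>p q. p \<in> P \<Longrightarrow> q \<in> P \<Longrightarrow> Dn a p q < Dn a u w \<Longrightarrow> \<forall>c j k. dst3 c j k \<longrightarrow> pat a c p q \<longrightarrow> emptyR a P c j k p q \<longrightarrow>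
     ok (half_theta6_edges P a) p q (2/sqrt 3 * ((hx a c q - hx a c p) + (hx a j p - hx a j q)))"
  show "\<forall>c j k. dst3 c j k \<longrightarrow> pat a c u w \<longrightarrow> emptyR a P c j k u w \<longrightarrow>
     ok (half_theta6_edges P a) u w (2/sqrt 3 * ((hx a c w - hx a c u) + (hx a j u - hx a j w)))"
  proof (intro allI impI)
    fix c j k assume d: "dst3 c j k" and pw: "pat a c u w" and emp: "emptyR a P c j k u w"
    let ?E = "half_theta6_edges P a"
    have c3: "c < 3" and j3: "j < 3" and k3: "k < 3" using d by (auto simp: dst3_def)
    obtain v where v: "v \<in> P" and e: "{u,v} \<in> ?E" and pv: "pat a c u v"
      and dv: "dist u v \<le> 2/sqrt 3 * (hx a c v - hx a c u)"
      and vmin: "\<forall>z\<in>P. pat a c u z \<longrightarrow> hx a c v \<le> hx a c z"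
      using closest[OF fin nz u c3 w pw] by blast
    have pw': "hx a c w > hx a c u" "hx a j w < hx a j u" "hx a k w < hx a k u" using pw pat_iff[OF d] by auto
    have pv': "hx a c v > hx a c u" "hx a j v < hx a j u" "hx a k v < hx a k u" using pv pat_iff[OF d] by auto
    have su: "hx a c u + hx a j u + hx a k u = 0" and sv: "hx a c v + hx a j v + hx a k v = 0"
      and sw: "hx a c w + hx a j w + hx a k w = 0" using dst3_sum[OF d] by auto
    have Dnw: "Dn a u w = hx a c w - hx a c u" by (rule Dn_pat[OF pw c3])
    have vw: "hx a c v \<le> hx a c w" using vmin w pw by blast
    show "ok ?E u w (2/sqrt 3 * ((hx a c w - hx a c u) + (hx a j u - hx a j w)))"
    proof (cases "v = w")
      case True
      have "dist u w \<le> 2/sqrt 3 * (hx a c w - hx a c u) + 2/sqrt 3 * 0" using dv True by simp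
      also have "\<dots> \<le> 2/sqrt 3 * ((hx a c w - hx a c u) + (hx a j u - hx a j w))"
        by (rule kap) (use pw' in linarith)
      finally show ?thesis using e True by (intro ok_edge) auto
    next
      case False
      have nzvw: "\<And>i. i < 3 \<Longrightarrow> hx a i v \<noteq> hx a i w" using nz v w False unfolding nzP_def by blast
      have cvw: "hx a c v < hx a c w" using vw nzvw[OF c3] by linarith
      have jvw: "hx a j v > hx a j w"
      proof (rule ccontr)
        assume "\<not> hx a j v > hx a j w"
        hence "hx a j v < hx a j w" using nzvw[OF j3] by linarith
        moreover have "hx a j v \<le> hx a j u" "hx a k v \<le> hx a k u" using pv' by auto
        ultimately show False using emp v False vw unfolding emptyR_def by blast
      qed
      show ?thesis
      proof (cases "hx a k v > hx a k w")
        case True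
        have pvw: "pat a c v w" using pat_iff[OF d] cvw jvw True by auto
        have lt: "Dn a v w < Dn a u w" using Dn_pat[OF pvw c3] Dnw pv' by linarith
        have empvw: "emptyR a P c j k v w" unfolding emptyR_def
        proof (intro ballI impI)
          fix z assume z: "z\<in>P" "z\<noteq>w" "hx a c z \<le> hx a c w" "hx a j z \<le> hx a j v"
            "hx a k z \<le> hx a k v" "hx a j z < hx a j w"
          have "hx a j z \<le> hx a j u" "hx a k z \<le> hx a k u" using z pv' by linarith+
          then show False using emp z unfolding emptyR_def by blast
        qed
        have okvw: "ok ?E v w (2/sqrt 3 * ((hx a c w - hx a c v) + (hx a j v - hx a j w)))"
          using IH[OF v w lt] d pvw empvw by blast
        have "ok ?E u w (2/sqrt 3 * (hx a c v - hx a c u) + 2/sqrt 3 * ((hx a c w - hx a c v) + (hx a j v - hx a j w)))"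
          by (rule ok_step[OF e dv okvw])
        then show ?thesis by (rule ok_le) (rule kap, use pv' in linarith)
      next
        case False
        hence kvw: "hx a k v < hx a k w" using nzvw[OF k3] by linarith
        have d2: "dst3 j c k" using d by (auto simp: dst3_def)
        have pwv: "pat a j w v" using pat_iff[OF d2] jvw cvw kvw by auto
        have lt: "Dn a w v < Dn a u w" using Dn_pat[OF pwv j3] Dnw pv' pw' su sw by linarith
        have empwv: "emptyR a P j c k w v" unfolding emptyR_def
        proof (intro ballI impI)
          fix z assume z: "z\<in>P" "z\<noteq>v" "hx a j z \<le> hx a j v" "hx a c z \<le> hx a c w"
            "hx a k z \<le> hx a k w" "hx a c z < hx a c v"
          have "hx a j z < hx a j u" "hx a k z < hx a k u" using z pv' pw' by linarith+
          then show False using below_empty[OF nz d u vmin] z by blast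
        qed
        have okwv: "ok ?E w v (2/sqrt 3 * ((hx a j v - hx a j w) + (hx a c w - hx a c v)))"
          using IH[OF w v lt] d2 pwv empwv by blast
        have "ok ?E u w (2/sqrt 3 * (hx a c v - hx a c u) + 2/sqrt 3 * ((hx a j v - hx a j w) + (hx a c w - hx a c v)))"
          by (rule ok_step[OF e dv ok_sym[OF okwv]])
        then show ?thesis by (rule ok_le) (rule kap, use pv' in linarith)
      qed
    qed
  qed
qed

lemma H_main:
  assumes fin: "finite P" and nz: "nzP a P"
  shows "\<forall>u\<in>P. \<forall>w\<in>P. \<forall>c j k. dst3 c j k \<longrightarrow> pat a c u w \<longrightarrow>
     ok (half_theta6_edges P a) u w (2/sqrt 3 * ((hx a c w - hx a c u) + max (hx a j u - hx a j w) (hx a k u - hx a k w)))"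
proof (rule pair_induct[OF fin, where f = "Dn a"])
  fix u w assume u: "u \<in> P" and w: "w \<in> P"
    and IH: "\<And>p q. p \<in> P \<Longrightarrow> q \<in> P \<Longrightarrow> Dn a p q < Dn a u w \<Longrightarrow> \<forall>c j k. dst3 c j k \<longrightarrow> pat a c p q \<longrightarrow>
     ok (half_theta6_edges P a) p q (2/sqrt 3 * ((hx a c q - hx a c p) + max (hx a j p - hx a j q) (hx a k p - hx a k q)))"
  show "\<forall>c j k. dst3 c j k \<longrightarrow> pat a c u w \<longrightarrow>
     ok (half_theta6_edges P a) u w (2/sqrt 3 * ((hx a c w - hx a c u) + max (hx a j u - hx a j w) (hx a k u - hx a k w)))"
  proof (intro allI impI)
    fix c j k assume d: "dst3 c j k" and pw: "pat a c u w"
    let ?E = "half_theta6_edges P a"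
    let ?B = "2/sqrt 3 * ((hx a c w - hx a c u) + max (hx a j u - hx a j w) (hx a k u - hx a k w))"
    have c3: "c < 3" and j3: "j < 3" and k3: "k < 3" using d by (auto simp: dst3_def)
    obtain v where v: "v \<in> P" and e: "{u,v} \<in> ?E" and pv: "pat a c u v"
      and dv: "dist u v \<le> 2/sqrt 3 * (hx a c v - hx a c u)"
      and vmin: "\<forall>z\<in>P. pat a c u z \<longrightarrow> hx a c v \<le> hx a c z"
      using closest[OF fin nz u c3 w pw] by blast
    have pw': "hx a c w > hx a c u" "hx a j w < hx a j u" "hx a k w < hx a k u" using pw pat_iff[OF d] by auto
    have pv': "hx a c v > hx a c u" "hx a j v < hx a j u" "hx a k v < hx a k u" using pv pat_iff[OF d] by auto
    have su: "hx a c u + hx a j u + hx a k u = 0" and sv: "hx a c v + hx a j v + hx a k v = 0"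
      and sw: "hx a c w + hx a j w + hx a k w = 0" using dst3_sum[OF d] by auto
    have Dnw: "Dn a u w = hx a c w - hx a c u" by (rule Dn_pat[OF pw c3])
    have vw: "hx a c v \<le> hx a c w" using vmin w pw by blast
    have RL: "\<And>p q c j k. p \<in> P \<Longrightarrow> q \<in> P \<Longrightarrow> dst3 c j k \<Longrightarrow> pat a c p q \<Longrightarrow> emptyR a P c j k p q \<Longrightarrow>
       ok ?E p q (2/sqrt 3 * ((hx a c q - hx a c p) + (hx a j p - hx a j q)))"
      using RL_main[OF fin nz] by blast
    show "ok ?E u w ?B"
    proof (cases "v = w")
      case True
      have "dist u w \<le> 2/sqrt 3 * (hx a c w - hx a c u) + 2/sqrt 3 * 0" using dv True by simp
      also have "\<dots> \<le> ?B"
        by (rule kap) (use pw' in linarith)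
      finally show ?thesis using e True by (intro ok_edge) auto
    next
      case False
      have nzvw: "\<And>i. i < 3 \<Longrightarrow> hx a i v \<noteq> hx a i w" using nz v w False unfolding nzP_def by blast
      have cvw: "hx a c v < hx a c w" using vw nzvw[OF c3] by linarith
      consider "hx a j v > hx a j w \<and> hx a k v > hx a k w" | "hx a j v < hx a j w" | "hx a k v < hx a k w"
        using nzvw[OF j3] nzvw[OF k3] by linarith
      then show ?thesis
      proof cases
        case 1
        have pvw: "pat a c v w" using pat_iff[OF d] cvw 1 by auto
        have lt: "Dn a v w < Dn a u w" using Dn_pat[OF pvw c3] Dnw pv' by linarith
        have okvw: "ok ?E v w (2/sqrt 3 * ((hx a c w - hx a c v) + max (hx a j v - hx a j w) (hx a k v - hx a k w)))"
          using IH[OF v w lt] d pvw by blast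
        have "ok ?E u w (2/sqrt 3 * (hx a c v - hx a c u) + 2/sqrt 3 * ((hx a c w - hx a c v) + max (hx a j v - hx a j w) (hx a k v - hx a k w)))"
          by (rule ok_step[OF e dv okvw])
        then show ?thesis by (rule ok_le) (rule kap, use pv' in linarith)
      next
        case 2
        have kvw: "hx a k v > hx a k w" using 2 cvw sv sw by linarith
        have d2: "dst3 k c j" using d by (auto simp: dst3_def)
        have pwv: "pat a k w v" using pat_iff[OF d2] kvw cvw 2 by auto
        have empwv: "emptyR a P k c j w v" unfolding emptyR_def
        proof (intro ballI impI)
          fix z assume z: "z\<in>P" "z\<noteq>v" "hx a k z \<le> hx a k v" "hx a c z \<le> hx a c w"
            "hx a j z \<le> hx a j w" "hx a c z < hx a c v"
          have "hx a j z < hx a j u" "hx a k z < hx a k u" using z pv' pw' by linarith+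
          then show False using below_empty[OF nz d u vmin] z by blast
        qed
        have okwv: "ok ?E w v (2/sqrt 3 * ((hx a k v - hx a k w) + (hx a c w - hx a c v)))"
          by (rule RL[OF w v d2 pwv empwv])
        have "ok ?E u w (2/sqrt 3 * (hx a c v - hx a c u) + 2/sqrt 3 * ((hx a k v - hx a k w) + (hx a c w - hx a c v)))"
          by (rule ok_step[OF e dv ok_sym[OF okwv]])
        then show ?thesis by (rule ok_le) (rule kap, use pv' in linarith)
      next
        case 3
        have jvw: "hx a j v > hx a j w" using 3 cvw sv sw by linarith
        have d2: "dst3 j c k" using d by (auto simp: dst3_def)
        have pwv: "pat a j w v" using pat_iff[OF d2] jvw cvw 3 by auto
        have empwv: "emptyR a P j c k w v" unfolding emptyR_def
        proof (intro ballI impI)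
          fix z assume z: "z\<in>P" "z\<noteq>v" "hx a j z \<le> hx a j v" "hx a c z \<le> hx a c w"
            "hx a k z \<le> hx a k w" "hx a c z < hx a c v"
          have "hx a j z < hx a j u" "hx a k z < hx a k u" using z pv' pw' by linarith+
          then show False using below_empty[OF nz d u vmin] z by blast
        qed
        have okwv: "ok ?E w v (2/sqrt 3 * ((hx a j v - hx a j w) + (hx a c w - hx a c v)))"
          by (rule RL[OF w v d2 pwv empwv])
        have "ok ?E u w (2/sqrt 3 * (hx a c v - hx a c u) + 2/sqrt 3 * ((hx a j v - hx a j w) + (hx a c w - hx a c v)))"
          by (rule ok_step[OF e dv ok_sym[OF okwv]])
        then show ?thesis by (rule ok_le) (rule kap, use pv' in linarith)
      qed
    qed
  qed
qed

lemma pair_case: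
  assumes fin: "finite P" and nz: "nzP a P" and d: "dst3 c j k" and u: "u \<in> P" and w: "w \<in> P"
    and sg: "(hx a c w > hx a c u \<and> hx a j w < hx a j u \<and> hx a k w < hx a k u) \<or>
             (hx a c w < hx a c u \<and> hx a j w > hx a j u \<and> hx a k w > hx a k u)"
  shows "ok (half_theta6_edges P a) u w (2/sqrt 3 * (\<bar>hx a c w - hx a c u\<bar> + max \<bar>hx a j w - hx a j u\<bar> \<bar>hx a k w - hx a k u\<bar>))"
  using sg
proof
  assume h: "hx a c w > hx a c u \<and> hx a j w < hx a j u \<and> hx a k w < hx a k u"
  hence pt: "pat a c u w" using pat_iff[OF d] by auto
  have "ok (half_theta6_edges P a) u w (2/sqrt 3 * ((hx a c w - hx a c u) + max (hx a j u - hx a j w) (hx a k u - hx a k w)))"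
    by (rule H_main[OF fin nz, rule_format, OF u w d pt])
  then show ?thesis by (rule ok_le) (use h in \<open>simp add: abs_of_pos abs_of_neg\<close>)
next
  assume h: "hx a c w < hx a c u \<and> hx a j w > hx a j u \<and> hx a k w > hx a k u"
  hence pt: "pat a c w u" using pat_iff[OF d] by auto
  have "ok (half_theta6_edges P a) w u (2/sqrt 3 * ((hx a c u - hx a c w) + max (hx a j w - hx a j u) (hx a k w - hx a k u)))"
    by (rule H_main[OF fin nz, rule_format, OF w u d pt])
  from ok_sym[OF this] show ?thesis by (rule ok_le) (use h in \<open>simp add: abs_of_pos abs_of_neg\<close>)
qed

definition Mx :: "real \<Rightarrow> complex \<Rightarrow> complex \<Rightarrow> real" where
  "Mx a u w = max (\<bar>hx a 0 w - hx a 0 u\<bar> + \<bar>hx a 1 w - hx a 1 u\<bar>)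
     (max (\<bar>hx a 0 w - hx a 0 u\<bar> + \<bar>hx a 2 w - hx a 2 u\<bar>) (\<bar>hx a 1 w - hx a 1 u\<bar> + \<bar>hx a 2 w - hx a 2 u\<bar>))"

lemma sign3:
  fixes a0 a1 a2 b0 b1 b2 :: real
  assumes "a0 \<noteq> b0" "a1 \<noteq> b1" "a2 \<noteq> b2" "a0 + a1 + a2 = 0" "b0 + b1 + b2 = 0"
  shows "(a0 > b0 \<and> a1 < b1 \<and> a2 < b2) \<or> (a0 < b0 \<and> a1 > b1 \<and> a2 > b2) \<or>
     ((a1 > b1 \<and> a0 < b0 \<and> a2 < b2) \<or> (a1 < b1 \<and> a0 > b0 \<and> a2 > b2)) \<or>
     ((a2 > b2 \<and> a0 < b0 \<and> a1 < b1) \<or> (a2 < b2 \<and> a0 > b0 \<and> a1 > b1))"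
proof (cases "a0 > b0")
  case T0: True
  show ?thesis
  proof (cases "a1 > b1")
    case True
    hence "a2 < b2" using T0 assms by linarith
    then show ?thesis using T0 True by blast
  next
    case F1: False
    hence l1: "a1 < b1" using assms by linarith
    show ?thesis
    proof (cases "a2 > b2")
      case True then show ?thesis using T0 l1 by blast
    next
      case False hence "a2 < b2" using assms by linarith
      then show ?thesis using T0 l1 by blast
    qed
  qed
next
  case F0: False
  hence l0: "a0 < b0" using assms by linarith
  show ?thesis
  proof (cases "a1 > b1")
    case T1: True
    show ?thesis
    proof (cases "a2 > b2")
      case True then show ?thesis using l0 T1 by blast
    next
      case False hence "a2 < b2" using assms by linarith
      then show ?thesis using l0 T1 by blast
    qed
  next
    case False
    hence l1: "a1 < b1" using assms by linarith
    hence "a2 > b2" using l0 assms by linarith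
    then show ?thesis using l0 l1 by blast
  qed
qed

lemma maxle: "(x::real) + y \<le> M \<Longrightarrow> x + z \<le> M \<Longrightarrow> x + max y z \<le> M"
  by (simp add: max_def)

lemma Mx_ge: "\<bar>hx a 0 w - hx a 0 u\<bar> + \<bar>hx a 1 w - hx a 1 u\<bar> \<le> Mx a u w"
  "\<bar>hx a 0 w - hx a 0 u\<bar> + \<bar>hx a 2 w - hx a 2 u\<bar> \<le> Mx a u w"
  "\<bar>hx a 1 w - hx a 1 u\<bar> + \<bar>hx a 2 w - hx a 2 u\<bar> \<le> Mx a u w"
  unfolding Mx_def by (simp_all add: le_max_iff_disj)

lemma pair_all:
  assumes fin: "finite P" and nz: "nzP a P" and u: "u \<in> P" and w: "w \<in> P"
  shows "ok (half_theta6_edges P a) u w (2/sqrt 3 * Mx a u w)"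
proof (cases "u = w")
  case True
  have "0 \<le> Mx a u w" unfolding Mx_def by (rule max.coboundedI1) simp
  hence "0 \<le> 2/sqrt 3 * Mx a u w" by simp
  then show ?thesis unfolding ok_def True using cn.cn_refl by blast
next
  case False
  have nzuw: "\<And>i. i < 3 \<Longrightarrow> hx a i w \<noteq> hx a i u" using nz u w False unfolding nzP_def by metis
  have n0: "hx a 0 w \<noteq> hx a 0 u" and n1: "hx a 1 w \<noteq> hx a 1 u" and n2: "hx a 2 w \<noteq> hx a 2 u"
    using nzuw by auto
  have s: "hx a 0 u + hx a 1 u + hx a 2 u = 0" "hx a 0 w + hx a 1 w + hx a 2 w = 0" using hx_sum012 by auto
  have d012: "dst3 0 1 2" and d102: "dst3 1 0 2" and d201: "dst3 2 0 1" by (auto simp: dst3_def)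
  have sg: "(hx a 0 w > hx a 0 u \<and> hx a 1 w < hx a 1 u \<and> hx a 2 w < hx a 2 u) \<or>
             (hx a 0 w < hx a 0 u \<and> hx a 1 w > hx a 1 u \<and> hx a 2 w > hx a 2 u) \<or>
             ((hx a 1 w > hx a 1 u \<and> hx a 0 w < hx a 0 u \<and> hx a 2 w < hx a 2 u) \<or>
             (hx a 1 w < hx a 1 u \<and> hx a 0 w > hx a 0 u \<and> hx a 2 w > hx a 2 u)) \<or>
             ((hx a 2 w > hx a 2 u \<and> hx a 0 w < hx a 0 u \<and> hx a 1 w < hx a 1 u) \<or>
             (hx a 2 w < hx a 2 u \<and> hx a 0 w > hx a 0 u \<and> hx a 1 w > hx a 1 u))"
    by (rule sign3[OF n0 n1 n2 s(2) s(1)])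
  consider "(hx a 0 w > hx a 0 u \<and> hx a 1 w < hx a 1 u \<and> hx a 2 w < hx a 2 u) \<or>
             (hx a 0 w < hx a 0 u \<and> hx a 1 w > hx a 1 u \<and> hx a 2 w > hx a 2 u)"
    | "(hx a 1 w > hx a 1 u \<and> hx a 0 w < hx a 0 u \<and> hx a 2 w < hx a 2 u) \<or>
             (hx a 1 w < hx a 1 u \<and> hx a 0 w > hx a 0 u \<and> hx a 2 w > hx a 2 u)"
    | "(hx a 2 w > hx a 2 u \<and> hx a 0 w < hx a 0 u \<and> hx a 1 w < hx a 1 u) \<or>
             (hx a 2 w < hx a 2 u \<and> hx a 0 w > hx a 0 u \<and> hx a 1 w > hx a 1 u)"
    using sg by blast
  then show ?thesis
  proof cases
    case 1
    from pair_case[OF fin nz d012 u w 1] show ?thesis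
      by (rule ok_le) (intro mult_left_mono maxle, use Mx_ge in auto)
  next
    case 2
    from pair_case[OF fin nz d102 u w 2] show ?thesis
      by (rule ok_le) (intro mult_left_mono maxle, use Mx_ge in \<open>auto simp: add.commute\<close>)
  next
    case 3
    from pair_case[OF fin nz d201 u w 3] show ?thesis
      by (rule ok_le) (intro mult_left_mono maxle, use Mx_ge in \<open>auto simp: add.commute\<close>)
  qed
qed

lemma abs_cos_shift: "\<bar>cos (x + real_of_int q * pi)\<bar> = \<bar>cos x\<bar>"
proof -
  have s: "sin (real_of_int q * pi) = 0" unfolding sin_zero_iff_int2 by blast
  have "cos (real_of_int q * pi) ^ 2 = 1" using sin_cos_squared_add[of "real_of_int q * pi"] s by simp
  hence c: "\<bar>cos (real_of_int q * pi)\<bar> = 1" by (auto simp: power2_eq_1_iff)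
  show ?thesis by (simp add: cos_add s abs_mult c)
qed

definition V :: "int \<Rightarrow> real \<Rightarrow> real" where
  "V \<rho> \<phi> = (if \<rho> = 0 then cos \<phi> else if \<rho> = 1 then cos (pi/3 + \<phi>) else cos (pi/3 - \<phi>))"

lemma mod3_cases: "(x::int) mod 3 = 0 \<or> x mod 3 = 1 \<or> x mod 3 = 2"
proof -
  have "0 \<le> x mod 3" "x mod 3 < 3" by simp_all
  thus ?thesis by linarith
qed

lemma absV:
  assumes ph: "\<bar>\<phi>\<bar> \<le> pi/6"
  shows "\<bar>cos (real_of_int n * pi / 3 + \<phi>)\<bar> = V (n mod 3) \<phi>"
proof -
  define q where "q = n div 3"
  define \<rho> where "\<rho> = n mod 3"
  have n: "n = 3 * q + \<rho>" unfolding q_def \<rho>_def by simp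
  have "real_of_int n * pi / 3 + \<phi> = (real_of_int \<rho> * pi / 3 + \<phi>) + real_of_int q * pi"
    unfolding n by (simp add: algebra_simps)
  hence e: "\<bar>cos (real_of_int n * pi / 3 + \<phi>)\<bar> = \<bar>cos (real_of_int \<rho> * pi / 3 + \<phi>)\<bar>"
    by (simp only: abs_cos_shift)
  have c0: "\<bar>cos \<phi>\<bar> = cos \<phi>" using ph by (intro abs_of_nonneg cos_ge_zero) auto
  have c1: "\<bar>cos (pi/3 + \<phi>)\<bar> = cos (pi/3 + \<phi>)" using ph by (intro abs_of_nonneg cos_ge_zero) auto
  have c2: "\<bar>cos (2*pi/3 + \<phi>)\<bar> = cos (pi/3 - \<phi>)"
  proof -
    have "2*pi/3 + \<phi> = pi - (pi/3 - \<phi>)" by simp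
    hence "cos (2*pi/3 + \<phi>) = - cos (pi/3 - \<phi>)" using cos_pi_minus[of "pi/3 - \<phi>"] by simp
    moreover have "cos (pi/3 - \<phi>) \<ge> 0" using ph by (intro cos_ge_zero) auto
    ultimately show ?thesis by simp
  qed
  consider "\<rho> = 0" | "\<rho> = 1" | "\<rho> = 2" unfolding \<rho>_def using mod3_cases by blast
  then show ?thesis
  proof cases
    case 1
    have "\<bar>cos (real_of_int n * pi / 3 + \<phi>)\<bar> = cos \<phi>" using e c0 1 by simp
    then show ?thesis using 1 unfolding \<rho>_def V_def by simp
  next
    case 2
    have "\<bar>cos (real_of_int n * pi / 3 + \<phi>)\<bar> = cos (pi/3 + \<phi>)" using e c1 2 by simp
    then show ?thesis using 2 unfolding \<rho>_def V_def by simp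
  next
    case 3
    have "real_of_int \<rho> * pi / 3 + \<phi> = 2*pi/3 + \<phi>" using 3 by simp
    hence "\<bar>cos (real_of_int n * pi / 3 + \<phi>)\<bar> = cos (pi/3 - \<phi>)" using e c2 by simp
    then show ?thesis using 3 unfolding \<rho>_def V_def by simp
  qed
qed

lemma G_form: "cos s + cos (pi/3 - s) = 3/2 * cos s + sqrt 3 / 2 * sin s"
  by (simp add: cos_diff cos_60 sin_60)

lemma V_pair:
  assumes ph: "\<bar>\<phi>\<bar> \<le> pi/6" and r: "\<rho> \<in> {0,1,2}" "\<rho>' \<in> {0,1,2}" "\<rho> \<noteq> \<rho>'"
  shows "V \<rho> \<phi> + V \<rho>' \<phi> \<le> cos \<bar>\<phi>\<bar> + cos (pi/3 - \<bar>\<phi>\<bar>)"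
proof -
  have a1: "cos (pi/3 + \<phi>) \<le> cos (pi/3 - \<bar>\<phi>\<bar>)" using ph by (subst cos_mono_le_eq) auto
  have a2: "cos (pi/3 - \<phi>) \<le> cos (pi/3 - \<bar>\<phi>\<bar>)" using ph by (subst cos_mono_le_eq) auto
  have a3: "cos (pi/3 - \<bar>\<phi>\<bar>) \<ge> 0" using ph by (intro cos_ge_zero) auto
  have a4: "cos (pi/3 + \<phi>) + cos (pi/3 - \<phi>) = cos \<phi>" by (simp add: cos_add cos_diff cos_60)
  show ?thesis using r a1 a2 a3 a4 unfolding V_def by auto
qed

lemma G_mono:
  assumes "0 \<le> s" "s \<le> t" "t \<le> pi/6"
  shows "sqrt 3 * cos s + sin s \<le> sqrt 3 * cos t + sin t"
proof -
  have e: "sqrt 3 * cos x + sin x = 2 * cos (pi/6 - x)" for x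
    by (simp add: cos_diff cos_30 sin_30)
  have "cos (pi/6 - s) \<le> cos (pi/6 - t)" using assms by (subst cos_mono_le_eq) auto
  then show ?thesis unfolding e by simp
qed

lemma lin3: "(p::real) + x * pi / 3 - y * pi / 3 = (x - y) * pi / 3 + p"
proof -
  have "(x - y) * pi / 3 = x * pi / 3 - y * pi / 3" by (simp add: left_diff_distrib diff_divide_distrib)
  thus ?thesis by linarith
qed

lemma angle_choice:
  assumes k: "k \<ge> 1" and d: "w \<noteq> u"
  shows "\<exists>j<k. 2/sqrt 3 * Mx (rot_angle k j) u w \<le> (sqrt 3 * cos (pi / (6 * real k)) + sin (pi / (6 * real k))) * dist u w"
proof -
  define r where "r = cmod (w - u)"
  define \<theta> where "\<theta> = Arg (w - u)"
  have wu: "w - u = complex_of_real r * cis \<theta>" using rcis_cmod_Arg[of "w - u"] by (simp add: r_def \<theta>_def rcis_def)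
  have r0: "r > 0" using d unfolding r_def by simp
  have dist: "dist u w = r" unfolding r_def by (simp add: dist_norm norm_minus_commute)
  have kr: "real k \<ge> 1" using k by simp
  define \<delta> where "\<delta> = pi / (3 * real k)"
  have \<delta>0: "\<delta> > 0" using kr unfolding \<delta>_def by simp
  have \<delta>k: "\<delta> * real k = pi / 3" unfolding \<delta>_def using kr by (simp add: field_simps)
  define tt where "tt = pi / (6 * real k)"
  have tt: "tt = \<delta> / 2" unfolding tt_def \<delta>_def by (simp add: field_simps)
  have tt6: "tt \<le> pi / 6" unfolding tt_def using kr by (simp add: field_simps)
  define x where "x = (\<theta> - pi/6) / \<delta>"
  define N where "N = \<lfloor>x + 1/2\<rfloor>"
  define \<phi> where "\<phi> = \<theta> - pi/6 - real_of_int N * \<delta>"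
  have N1: "real_of_int N \<le> x + 1/2" and N2: "x + 1/2 < real_of_int N + 1"
    unfolding N_def by linarith+
  have \<phi>x: "\<phi> = \<delta> * (x - real_of_int N)" unfolding \<phi>_def x_def using \<delta>0 by (simp add: field_simps)
  have "\<bar>x - real_of_int N\<bar> \<le> 1/2" using N1 N2 by linarith
  moreover have "\<bar>\<phi>\<bar> = \<delta> * \<bar>x - real_of_int N\<bar>" unfolding \<phi>x abs_mult using \<delta>0 by simp
  ultimately have "\<bar>\<phi>\<bar> \<le> \<delta> * (1/2)" using \<delta>0 by (simp add: mult_left_mono)
  hence ph: "\<bar>\<phi>\<bar> \<le> tt" using tt by simp
  hence ph6: "\<bar>\<phi>\<bar> \<le> pi/6" using tt6 by linarith
  define jj where "jj = N mod int k"
  define m where "m = N div int k"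
  have Nm: "N = m * int k + jj" unfolding m_def jj_def by simp
  have jj0: "0 \<le> jj" and jjk: "jj < int k" unfolding jj_def using k by auto
  define j where "j = nat jj"
  have j: "j < k" unfolding j_def using jj0 jjk by linarith
  have jr: "real j = real_of_int jj" unfolding j_def using jj0 by simp
  define a where "a = rot_angle k j"
  have a: "a = real_of_int jj * \<delta>" unfolding a_def rot_angle_def \<delta>_def jr by simp
  have Nd: "real_of_int N * \<delta> = real_of_int m * pi / 3 + real_of_int jj * \<delta>"
  proof -
    have "real_of_int N * \<delta> = real_of_int m * (\<delta> * real k) + real_of_int jj * \<delta>"
      unfolding Nm by (simp add: algebra_simps)
    then show ?thesis using \<delta>k by simp
  qed
  have di: "\<bar>hx a i w - hx a i u\<bar> = r * V ((m - 2 * int i - 1) mod 3) \<phi>" for i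
  proof -
    have th: "\<theta> = \<phi> + pi/6 + real_of_int m * pi / 3 + real_of_int jj * \<delta>"
      unfolding \<phi>_def Nd by (simp add: algebra_simps)
    have "\<theta> - bisector a i = \<phi> + real_of_int m * pi / 3 - real (2 * i + 1) * pi / 3"
      unfolding bisector_def a using th by linarith
    also have "\<dots> = (real_of_int m - real (2 * i + 1)) * pi / 3 + \<phi>" by (rule lin3)
    also have "real_of_int m - real (2 * i + 1) = real_of_int (m - 2 * int i - 1)" by simp
    finally have "\<theta> - bisector a i = real_of_int (m - 2 * int i - 1) * pi / 3 + \<phi>" .
    hence h1: "hx a i w - hx a i u = r * cos (real_of_int (m - 2 * int i - 1) * pi / 3 + \<phi>)"
      by (simp only: hx_rcis[OF wu, of a i])
    have X: "\<bar>cos (real_of_int (m - 2 * int i - 1) * pi / 3 + \<phi>)\<bar> = V ((m - 2 * int i - 1) mod 3) \<phi>"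
      by (rule absV[OF ph6])
    show ?thesis unfolding h1 abs_mult X using r0 by simp
  qed
  define \<rho>0 where "\<rho>0 = (m - 2 * int 0 - 1) mod 3"
  define \<rho>1 where "\<rho>1 = (m - 2 * int 1 - 1) mod 3"
  define \<rho>2 where "\<rho>2 = (m - 2 * int 2 - 1) mod 3"
  have R: "\<rho>0 \<in> {0,1,2}" "\<rho>1 \<in> {0,1,2}" "\<rho>2 \<in> {0,1,2}" unfolding \<rho>0_def \<rho>1_def \<rho>2_def
    using mod3_cases by blast+
  have D: "\<rho>0 \<noteq> \<rho>1" "\<rho>0 \<noteq> \<rho>2" "\<rho>1 \<noteq> \<rho>2" unfolding \<rho>0_def \<rho>1_def \<rho>2_def by presburger+
  define G where "G = cos \<bar>\<phi>\<bar> + cos (pi/3 - \<bar>\<phi>\<bar>)"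
  have p01: "V \<rho>0 \<phi> + V \<rho>1 \<phi> \<le> G" unfolding G_def using V_pair[OF ph6] R D by blast
  have p02: "V \<rho>0 \<phi> + V \<rho>2 \<phi> \<le> G" unfolding G_def using V_pair[OF ph6] R D by blast
  have p12: "V \<rho>1 \<phi> + V \<rho>2 \<phi> \<le> G" unfolding G_def using V_pair[OF ph6] R D by blast
  have d0: "\<bar>hx a 0 w - hx a 0 u\<bar> = r * V \<rho>0 \<phi>" using di[of 0] unfolding \<rho>0_def by simp
  have d1: "\<bar>hx a 1 w - hx a 1 u\<bar> = r * V \<rho>1 \<phi>" using di[of 1] unfolding \<rho>1_def by simp
  have d2: "\<bar>hx a 2 w - hx a 2 u\<bar> = r * V \<rho>2 \<phi>" using di[of 2] unfolding \<rho>2_def by simp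
  have q01: "r * V \<rho>0 \<phi> + r * V \<rho>1 \<phi> \<le> r * G" using p01 r0 by (simp add: distrib_left[symmetric])
  have q02: "r * V \<rho>0 \<phi> + r * V \<rho>2 \<phi> \<le> r * G" using p02 r0 by (simp add: distrib_left[symmetric])
  have q12: "r * V \<rho>1 \<phi> + r * V \<rho>2 \<phi> \<le> r * G" using p12 r0 by (simp add: distrib_left[symmetric])
  have MxG: "Mx a u w \<le> r * G" unfolding Mx_def d0 d1 d2 using q01 q02 q12 by simp
  have "2/sqrt 3 * Mx a u w \<le> 2/sqrt 3 * (r * G)" using MxG by (intro mult_left_mono) auto
  also have "\<dots> = r * (sqrt 3 * cos \<bar>\<phi>\<bar> + sin \<bar>\<phi>\<bar>)"
    unfolding G_def G_form by (simp add: field_simps)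
  also have "\<dots> \<le> r * (sqrt 3 * cos tt + sin tt)"
    using G_mono[of "\<bar>\<phi>\<bar>" tt] ph tt6 r0 by (intro mult_left_mono) auto
  finally have "2/sqrt 3 * Mx a u w \<le> (sqrt 3 * cos tt + sin tt) * dist u w" using dist by (simp add: mult.commute)
  then show ?thesis using j unfolding a_def tt_def by blast
qed

lemma card_edges:
  assumes fin: "finite P" and nz: "nzP a P"
  shows "card (half_theta6_edges P a) \<le> 3 * card P"
proof -
  define A where "A = {(u,w). half_theta6_arc P a u w}"
  have AP: "A \<subseteq> P \<times> P" unfolding A_def half_theta6_arc_def by auto
  hence fA: "finite A" using fin by (meson finite_SigmaI finite_subset)
  have E: "half_theta6_edges P a = (\<lambda>(u,w). {u,w}) ` A" unfolding half_theta6_edges_def A_def by auto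
  define C where "C u w = (SOME c. c<3 \<and> pos_cone a c u w \<and> (\<forall>v\<in>P. pos_cone a c u v \<longrightarrow> proj_bis a c u w \<le> proj_bis a c u v))" for u w
  have Cp: "C u w < 3 \<and> pos_cone a (C u w) u w \<and> (\<forall>v\<in>P. pos_cone a (C u w) u v \<longrightarrow> proj_bis a (C u w) u w \<le> proj_bis a (C u w) u v)"
    if "(u,w) \<in> A" for u w
  proof -
    have "\<exists>c. c<3 \<and> pos_cone a c u w \<and> (\<forall>v\<in>P. pos_cone a c u v \<longrightarrow> proj_bis a c u w \<le> proj_bis a c u v)"
      using that unfolding A_def half_theta6_arc_def by auto
    then show ?thesis unfolding C_def by (rule someI_ex)
  qed
  define g where "g x = (fst x, C (fst x) (snd x))" for x
  have inj: "inj_on g A"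
  proof (rule inj_onI)
    fix x y assume x: "x \<in> A" and y: "y \<in> A" and gxy: "g x = g y"
    obtain u w where xe: "x = (u,w)" by (cases x)
    obtain u' w' where ye: "y = (u',w')" by (cases y)
    have uu: "u' = u" and cc: "C u' w' = C u w" using gxy unfolding g_def xe ye by auto
    have xA: "(u,w) \<in> A" and yA: "(u,w') \<in> A" using x y xe ye uu by auto
    have w: "w \<in> P" and w': "w' \<in> P" using xA yA AP by auto
    define c where "c = C u w"
    have c1: "pos_cone a c u w" "\<forall>v\<in>P. pos_cone a c u v \<longrightarrow> proj_bis a c u w \<le> proj_bis a c u v"
      using Cp[OF xA] unfolding c_def by auto
    have c2: "pos_cone a c u w'" "\<forall>v\<in>P. pos_cone a c u v \<longrightarrow> proj_bis a c u w' \<le> proj_bis a c u v"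
      using Cp[OF yA] cc uu unfolding c_def by auto
    have c3: "c < 3" using Cp[OF xA] unfolding c_def by auto
    have "proj_bis a c u w = proj_bis a c u w'" using c1 c2 w w' by (meson order_antisym)
    hence "hx a c w = hx a c w'" by (simp add: proj_bis_hx)
    hence "w = w'" using nz w w' c3 unfolding nzP_def by blast
    then show "x = y" using xe ye uu by simp
  qed
  have gA: "g ` A \<subseteq> P \<times> {..<3}" using Cp AP unfolding g_def by auto
  have "card A \<le> card (P \<times> {..<(3::nat)})" by (rule card_inj_on_le[OF inj gA]) (use fin in simp)
  also have "\<dots> = 3 * card P" by (simp add: card_cartesian_product)
  finally have cA: "card A \<le> 3 * card P" .
  have "card (half_theta6_edges P a) \<le> card A" unfolding E by (rule card_image_le[OF fA])
  with cA show ?thesis by linarith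
qed


theorem corollary2:
  fixes k n :: nat and P :: "complex set"
  assumes "k \<ge> 1" and "finite P" and "card P = n" and "general_position k P"
  shows "card (union_edges k P) \<le> 3 * k * n \<and>
    (\<forall>u\<in>P. \<forall>w\<in>P. \<exists>xs. is_path (union_edges k P) xs u w \<and>
       path_length xs \<le> (sqrt 3 * cos (pi / (6 * real k)) + sin (pi / (6 * real k))) * dist u w)"
proof -
  have fin: "finite P" by (rule assms(2))
  have nz: "\<And>j. j < k \<Longrightarrow> nzP (rot_angle k j) P" using gp_nzP assms(4) by blast
  have card: "card (union_edges k P) \<le> 3 * k * n"
  proof -
    have "card (union_edges k P) \<le> (\<Sum>j<k. card (half_theta6_edges P (rot_angle k j)))"
      unfolding union_edges_def by (rule card_UN_le) simp
    also have "\<dots> \<le> (\<Sum>j<k. 3 * n)"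
      by (rule sum_mono) (use card_edges[OF fin nz] assms(3) in auto)
    also have "\<dots> = 3 * k * n" by (simp add: algebra_simps)
    finally show ?thesis .
  qed
  have path: "\<forall>u\<in>P. \<forall>w\<in>P. \<exists>xs. is_path (union_edges k P) xs u w \<and>
       path_length xs \<le> (sqrt 3 * cos (pi / (6 * real k)) + sin (pi / (6 * real k))) * dist u w"
  proof (intro ballI)
    fix u w assume u: "u \<in> P" and w: "w \<in> P"
    show "\<exists>xs. is_path (union_edges k P) xs u w \<and>
       path_length xs \<le> (sqrt 3 * cos (pi / (6 * real k)) + sin (pi / (6 * real k))) * dist u w"
    proof (cases "w = u")
      case True
      show ?thesis using True by (intro exI[of _ "[u]"]) (simp add: is_path_def path_length_def)
    next
      case False
      obtain j where j: "j < k" and b: "2/sqrt 3 * Mx (rot_angle k j) u w \<le>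
          (sqrt 3 * cos (pi / (6 * real k)) + sin (pi / (6 * real k))) * dist u w"
        using angle_choice[OF assms(1) False] by blast
      have o1: "ok (half_theta6_edges P (rot_angle k j)) u w (2/sqrt 3 * Mx (rot_angle k j) u w)"
        by (rule pair_all[OF fin nz[OF j] u w])
      have sub: "half_theta6_edges P (rot_angle k j) \<subseteq> union_edges k P"
        unfolding union_edges_def using j by blast
      have "ok (union_edges k P) u w ((sqrt 3 * cos (pi / (6 * real k)) + sin (pi / (6 * real k))) * dist u w)"
        using ok_le[OF ok_mono[OF o1 sub] b] .
      then obtain l where l: "cn (union_edges k P) u w l"
        "l \<le> (sqrt 3 * cos (pi / (6 * real k)) + sin (pi / (6 * real k))) * dist u w"
        unfolding ok_def by blast
      from cn_path[OF l(1)] obtain xs where "is_path (union_edges k P) xs u w" "path_length xs = l" by blast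
      then show ?thesis using l(2) by auto
    qed
  qed
  show ?thesis using card path by blast
qed

end
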